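(* A graph $G$ is non-ambiguous if and only if it is covering-minimal.
   Context: Graphs are finite, simple, undirected, connected; $B_G(v)$ denotes the ball of radius $1$ around $v$ (vertices $N_G(v)\cup\{v\}$ and the edges from $v$). A labelling $\lambda$ of the vertices of $G$ is locally bijective if (1) for each $v$ and all $v',v''\in B_G(v)$, $\lambda(v')=\lambda(v'')$ iff $v'=v''$, and (2) for all $v',v''$ with $\lambda(v')=\lambda(v'')$, the labelled balls $(B_G(v'),\lambda)$ and $(B_G(v''),\lambda)$ are isomorphic. $G$ is ambiguous if it has a locally bijective labelling that is not bijective, and non-ambiguous otherwise. $G$ is a covering of $H$ via $\gamma$ if $\gamma$ is a surjective homomorphism whose restriction to each $B_G(v)$ is a bijection onto $B_H(\gamma(v))$; $G$ is covering-minimal if every covering from $G$ to some graph $H$ is a bijection. *)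

theory Defs
  imports Main
begin

definition graph :: "'a set \<Rightarrow> ('a \<Rightarrow> 'a \<Rightarrow> bool) \<Rightarrow> bool" where
  "graph V E \<longleftrightarrow> finite V \<and> V \<noteq> {} \<and>
     (\<forall>x y. E x y \<longrightarrow> x \<in> V \<and> y \<in> V) \<and>
     (\<forall>x y. E x y \<longrightarrow> E y x) \<and> (\<forall>x. \<not> E x x) \<and>
     (\<forall>x\<in>V. \<forall>y\<in>V. E\<^sup>*\<^sup>* x y)"

definition ball_verts :: "('a \<Rightarrow> 'a \<Rightarrow> bool) \<Rightarrow> 'a \<Rightarrow> 'a set" where
  "ball_verts E v = insert v {u. E v u}"

definition ball_edge :: "('a \<Rightarrow> 'a \<Rightarrow> bool) \<Rightarrow> 'a \<Rightarrow> 'a \<Rightarrow> 'a \<Rightarrow> bool" where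
  "ball_edge E v x y \<longleftrightarrow> (x = v \<and> E v y) \<or> (y = v \<and> E v x)"

definition labelled_balls_iso ::
  "('a \<Rightarrow> 'a \<Rightarrow> bool) \<Rightarrow> ('a \<Rightarrow> 'l) \<Rightarrow> 'a \<Rightarrow> 'a \<Rightarrow> bool" where
  "labelled_balls_iso E lam v1 v2 \<longleftrightarrow>
     (\<exists>f. bij_betw f (ball_verts E v1) (ball_verts E v2) \<and>
          (\<forall>x\<in>ball_verts E v1. lam (f x) = lam x) \<and>
          (\<forall>x\<in>ball_verts E v1. \<forall>y\<in>ball_verts E v1.
              ball_edge E v1 x y \<longleftrightarrow> ball_edge E v2 (f x) (f y)))"

definition locally_bijective ::
  "'a set \<Rightarrow> ('a \<Rightarrow> 'a \<Rightarrow> bool) \<Rightarrow> ('a \<Rightarrow> 'l) \<Rightarrow> bool" where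
  "locally_bijective V E lam \<longleftrightarrow>
     (\<forall>v\<in>V. inj_on lam (ball_verts E v)) \<and>
     (\<forall>v1\<in>V. \<forall>v2\<in>V. lam v1 = lam v2 \<longrightarrow> labelled_balls_iso E lam v1 v2)"

text \<open>Labels are taken in nat; since V is finite this loses no generality.\<close>
definition ambiguous :: "'a set \<Rightarrow> ('a \<Rightarrow> 'a \<Rightarrow> bool) \<Rightarrow> bool" where
  "ambiguous V E \<longleftrightarrow>
     (\<exists>lam :: 'a \<Rightarrow> nat. locally_bijective V E lam \<and> \<not> inj_on lam V)"

definition covering ::
  "'a set \<Rightarrow> ('a \<Rightarrow> 'a \<Rightarrow> bool) \<Rightarrow> 'b set \<Rightarrow> ('b \<Rightarrow> 'b \<Rightarrow> bool) \<Rightarrow> ('a \<Rightarrow> 'b) \<Rightarrow> bool" where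
  "covering V E W F \<gamma> \<longleftrightarrow>
     \<gamma> ` V = W \<and>
     (\<forall>x y. E x y \<longrightarrow> F (\<gamma> x) (\<gamma> y)) \<and>
     (\<forall>v\<in>V. bij_betw \<gamma> (ball_verts E v) (ball_verts F (\<gamma> v)))"

text \<open>Target graphs H are taken with vertices in nat; every finite graph is
  isomorphic to one of these.\<close>
definition covering_minimal :: "'a set \<Rightarrow> ('a \<Rightarrow> 'a \<Rightarrow> bool) \<Rightarrow> bool" where
  "covering_minimal V E \<longleftrightarrow>
     (\<forall>(W :: nat set) F \<gamma>. graph W F \<and> covering V E W F \<gamma> \<longrightarrow> bij_betw \<gamma> V W)"

end

theory Submission
  imports Defs
begin

lemma ball_edge_char:
  assumes irr: "\<forall>x. \<not> E x x" and x: "x \<in> ball_verts E v" and y: "y \<in> ball_verts E v"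
  shows "ball_edge E v x y \<longleftrightarrow> (x = v \<and> y \<noteq> v) \<or> (y = v \<and> x \<noteq> v)"
  using assms unfolding ball_edge_def ball_verts_def by auto

lemma dir1:
  assumes g: "graph V E" and nam: "\<not> ambiguous V E"
  shows "covering_minimal V E"
  unfolding covering_minimal_def
proof (intro allI impI)
  fix W :: "nat set" and F \<gamma>
  assume "graph W F \<and> covering V E W F \<gamma>"
  hence cov: "covering V E W F \<gamma>" by simp
  have irr: "\<forall>x. \<not> E x x" using g unfolding graph_def by blast
  have bb: "\<And>v. v \<in> V \<Longrightarrow> bij_betw \<gamma> (ball_verts E v) (ball_verts F (\<gamma> v))"
    using cov unfolding covering_def by blast
  have inb: "\<And>v. v \<in> ball_verts E v" unfolding ball_verts_def by simp
  have lb: "locally_bijective V E \<gamma>"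
    unfolding locally_bijective_def
  proof (intro conjI ballI impI)
    fix v assume "v \<in> V" thus "inj_on \<gamma> (ball_verts E v)" using bb bij_betw_def by blast
  next
    fix v1 v2 assume v1: "v1 \<in> V" and v2: "v2 \<in> V" and eq: "\<gamma> v1 = \<gamma> v2"
    define g where "g = inv_into (ball_verts E v2) \<gamma>"
    have b1: "bij_betw \<gamma> (ball_verts E v1) (ball_verts F (\<gamma> v1))" using bb v1 .
    have b2: "bij_betw g (ball_verts F (\<gamma> v1)) (ball_verts E v2)"
      unfolding g_def eq using bb[OF v2] by (rule bij_betw_inv_into)
    have bf: "bij_betw (g \<circ> \<gamma>) (ball_verts E v1) (ball_verts E v2)"
      using b1 b2 by (rule bij_betw_trans)
    have lab: "\<forall>x\<in>ball_verts E v1. \<gamma> ((g \<circ> \<gamma>) x) = \<gamma> x"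
    proof
      fix x assume "x \<in> ball_verts E v1"
      hence "\<gamma> x \<in> ball_verts F (\<gamma> v1)" using b1 bij_betwE by blast
      hence "\<gamma> x \<in> \<gamma> ` ball_verts E v2" using bb[OF v2] eq bij_betw_imp_surj_on by metis
      thus "\<gamma> ((g \<circ> \<gamma>) x) = \<gamma> x" unfolding g_def by (simp add: f_inv_into_f)
    qed
    have fv: "(g \<circ> \<gamma>) v1 = v2"
    proof -
      have "inj_on \<gamma> (ball_verts E v2)" using bb[OF v2] bij_betw_def by blast
      moreover have "(g \<circ> \<gamma>) v1 \<in> ball_verts E v2" using bf inb bij_betwE by blast
      ultimately show ?thesis using lab inb eq by (metis inj_on_def)
    qed
    have injf: "inj_on (g \<circ> \<gamma>) (ball_verts E v1)" using bf bij_betw_def by blast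
    show "labelled_balls_iso E \<gamma> v1 v2"
      unfolding labelled_balls_iso_def
    proof (intro exI conjI ballI)
      show "bij_betw (g \<circ> \<gamma>) (ball_verts E v1) (ball_verts E v2)" by (rule bf)
    next
      fix x assume "x \<in> ball_verts E v1" thus "\<gamma> ((g \<circ> \<gamma>) x) = \<gamma> x" using lab by blast
    next
      fix x y assume x: "x \<in> ball_verts E v1" and y: "y \<in> ball_verts E v1"
      have fx: "(g \<circ> \<gamma>) x \<in> ball_verts E v2" and fy: "(g \<circ> \<gamma>) y \<in> ball_verts E v2"
        using bf x y bij_betwE by blast+
      have ex: "(g \<circ> \<gamma>) x = v2 \<longleftrightarrow> x = v1" using injf x inb fv by (metis inj_on_def)
      have ey: "(g \<circ> \<gamma>) y = v2 \<longleftrightarrow> y = v1" using injf y inb fv by (metis inj_on_def)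
      show "ball_edge E v1 x y \<longleftrightarrow> ball_edge E v2 ((g \<circ> \<gamma>) x) ((g \<circ> \<gamma>) y)"
        using ball_edge_char[OF irr x y] ball_edge_char[OF irr fx fy] ex ey by blast
    qed
  qed
  hence "inj_on \<gamma> V" using nam unfolding ambiguous_def by blast
  moreover have "\<gamma> ` V = W" using cov unfolding covering_def by blast
  ultimately show "bij_betw \<gamma> V W" unfolding bij_betw_def by blast
qed

lemma dir2:
  assumes g: "graph V E" and cm: "covering_minimal V E"
  shows "\<not> ambiguous V E"
proof
  assume "ambiguous V E"
  then obtain lam :: "'a \<Rightarrow> nat" where lb: "locally_bijective V E lam" and ni: "\<not> inj_on lam V"
    unfolding ambiguous_def by blast
  define W where "W = lam ` V"
  define F where "F = (\<lambda>a b. \<exists>x y. E x y \<and> lam x = a \<and> lam y = b)"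
  have fin: "finite V" and ne: "V \<noteq> {}" and inV: "\<forall>x y. E x y \<longrightarrow> x \<in> V \<and> y \<in> V"
    and sym: "\<forall>x y. E x y \<longrightarrow> E y x" and irr: "\<forall>x. \<not> E x x"
    and con: "\<forall>x\<in>V. \<forall>y\<in>V. E\<^sup>*\<^sup>* x y" using g unfolding graph_def by blast+
  have inj1: "\<And>v. v \<in> V \<Longrightarrow> inj_on lam (ball_verts E v)" using lb unfolding locally_bijective_def by blast
  have iso: "\<And>v1 v2. v1 \<in> V \<Longrightarrow> v2 \<in> V \<Longrightarrow> lam v1 = lam v2 \<Longrightarrow> labelled_balls_iso E lam v1 v2"
    using lb unfolding locally_bijective_def by blast
  have adjne: "\<And>x y. E x y \<Longrightarrow> lam x \<noteq> lam y"
  proof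
    fix x y assume e: "E x y" and l: "lam x = lam y"
    have "x \<in> V" using inV e by blast
    moreover have "x \<in> ball_verts E x" "y \<in> ball_verts E x" using e unfolding ball_verts_def by auto
    ultimately have "x = y" using inj1 l by (meson inj_onD)
    thus False using irr e by blast
  qed
  have rt: "E\<^sup>*\<^sup>* x y \<Longrightarrow> F\<^sup>*\<^sup>* (lam x) (lam y)" for x y
  proof (induction rule: rtranclp_induct)
    case base thus ?case by simp
  next
    case (step y z)
    have "F (lam y) (lam z)" unfolding F_def using step(2) by blast
    with step(3) show ?case by (rule rtranclp.rtrancl_into_rtrancl)
  qed
  have gW: "graph W F"
    unfolding graph_def
  proof (intro conjI allI impI ballI)
    show "finite W" using fin W_def by simp
    show "W \<noteq> {}" using ne W_def by simp
  next
    fix a b assume "F a b" thus "a \<in> W" "b \<in> W" unfolding F_def W_def using inV by blast+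
  next
    fix a b assume "F a b" thus "F b a" unfolding F_def using sym by blast
  next
    fix a show "\<not> F a a" unfolding F_def using adjne by metis
  next
    fix a b assume "a \<in> W" "b \<in> W" thus "F\<^sup>*\<^sup>* a b" unfolding W_def using con rt by blast
  qed
  have cov: "covering V E W F lam"
    unfolding covering_def
  proof (intro conjI allI impI ballI)
    show "lam ` V = W" using W_def by simp
  next
    fix x y assume "E x y" thus "F (lam x) (lam y)" unfolding F_def by blast
  next
    fix v assume v: "v \<in> V"
    show "bij_betw lam (ball_verts E v) (ball_verts F (lam v))"
      unfolding bij_betw_def
    proof
      show "inj_on lam (ball_verts E v)" using inj1 v .
      show "lam ` ball_verts E v = ball_verts F (lam v)"
      proof
        show "lam ` ball_verts E v \<subseteq> ball_verts F (lam v)"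
          unfolding ball_verts_def F_def by auto
      next
        show "ball_verts F (lam v) \<subseteq> lam ` ball_verts E v"
        proof
          fix b assume "b \<in> ball_verts F (lam v)"
          hence "b = lam v \<or> F (lam v) b" unfolding ball_verts_def by simp
          thus "b \<in> lam ` ball_verts E v"
          proof
            assume "b = lam v" thus ?thesis unfolding ball_verts_def by simp
          next
            assume "F (lam v) b"
            then obtain x y where e: "E x y" and lx: "lam x = lam v" and ly: "lam y = b"
              unfolding F_def by blast
            have xV: "x \<in> V" using inV e by blast
            obtain f where bf: "bij_betw f (ball_verts E x) (ball_verts E v)"
              and fl: "\<forall>z\<in>ball_verts E x. lam (f z) = lam z"
              using iso[OF xV v lx] unfolding labelled_balls_iso_def by blast
            have "y \<in> ball_verts E x" using e unfolding ball_verts_def by simp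
            hence "f y \<in> ball_verts E v" "lam (f y) = b" using bf fl ly bij_betwE by blast+
            thus ?thesis by force
          qed
        qed
      qed
    qed
  qed
  have "bij_betw lam V W" using cm gW cov unfolding covering_minimal_def by blast
  thus False using ni bij_betw_def by blast
qed

theorem mainTheorem12:
  fixes V :: "'a set" and E :: "'a \<Rightarrow> 'a \<Rightarrow> bool"
  assumes "graph V E"
  shows "\<not> ambiguous V E \<longleftrightarrow> covering_minimal V E"
  using dir1[OF assms] dir2[OF assms] by blast

end
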